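(* Let $\Lambda$ be a set and let $(\mathfrak{S},\lambda,\parallel,\Gamma,\gamma)$ be a composition-order invariant $\Lambda$-system algebra such that $\Gamma(s)\supseteq\{\{i,i'\}\mid i,i'\in\lambda(s),\ i\neq i'\}$ for all $s\in\mathfrak{S}$. Let $s_0,s_1,r_1,r_2\in\mathfrak{S}$ be such that $\lambda(s_0),\lambda(s_1),\lambda(r_1),\lambda(r_2)$ are pairwise disjoint, and let $s_0^1,s_0^2\in\lambda(s_0)$, $s_1^1,s_1^2\in\lambda(s_1)$, $r_1^1,r_1^2\in\lambda(r_1)$, $r_2^1,r_2^2\in\lambda(r_2)$ be eight distinct interface labels. Define $\mathcal{S}_0:=\{\gamma_{r_1^2,e^2}(\gamma_{s_0^2,e^1}(\gamma_{s_0^1,r_1^1}(s_0\parallel r_1\parallel e)))\mid e\in\mathfrak{S},\ \lambda(e)\cap\lambda(s_0)=\emptyset=\lambda(e)\cap\lambda(r_1),\ e^1,e^2\in\lambda(e),\ e^1\neq e^2\}$, $\mathcal{S}_1:=\{\gamma_{e^2,r_2^2}(\gamma_{s_1^2,r_2^1}(\gamma_{s_1^1,e^1}(s_1\parallel e\parallel r_2)))\mid e\in\mathfrak{S},\ \lambda(e)\cap\lambda(s_1)=\emptyset=\lambda(e)\cap\lambda(r_2),\ e^1,e^2\in\lambda(e),\ e^1\neq e^2\}$, $\mathcal{S}_{=}:=\{\gamma_{r_1^2,r_2^2}(\gamma_{e^2,r_2^1}(\gamma_{e^1,r_1^1}(e\parallel r_1\parallel r_2)))\mid e\in\mathfrak{S},\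 \lambda(e)\cap\lambda(r_1)=\emptyset=\lambda(e)\cap\lambda(r_2),\ e^1,e^2\in\lambda(e),\ e^1\neq e^2\}$. Then $\mathcal{S}_0\cap\mathcal{S}_1\cap\mathcal{S}_{=}\neq\emptyset$.
   Context: A $\Lambda$-system algebra $(\mathfrak{S},\lambda,\parallel,\Gamma,\gamma)$ consists of a set $\mathfrak{S}$ (systems), a function $\lambda:\mathfrak{S}\to\mathcal{P}(\Lambda)$ with $\lambda(s)$ finite for all $s$, a partial binary operation $\parallel$ on $\mathfrak{S}$, a function $\Gamma$ assigning to each system $s$ a set $\Gamma(s)$ of unordered pairs $\{i,i'\}$ with $i,i'\in\lambda(s)$, and a partial function $\gamma$ mapping a pair $\{i,i'\}$ and a system $s$ to a system $\gamma_{i,i'}(s)$, such that: $s_1\parallel s_2$ is defined iff $\lambda(s_1)\cap\lambda(s_2)=\emptyset$, in which case $\lambda(s_1\parallel s_2)=\lambda(s_1)\cup\lambda(s_2)$ and for $j\in\{1,2\}$ and $i,i'\in\lambda(s_j)$ one has $\{i,i'\}\in\Gamma(s_1\parallel s_2)\iff\{i,i'\}\in\Gamma(s_j)$; and $\gamma_{i,i'}(s)$ is defined iff $\{i,i'\}\in\Gamma(s)$, in which case $\lambda(\gamma_{i,i'}(s))=\lambda(s)\setminus\{i,i'\}$. $\Gamma$ permits reordering if for all $s$, $\{i,i'\}\in\Gamma(s)$ and $\{j,j'\}\in\Gamma(\gamma_{i,i'}(s))$ we have $\{j,j'\}\in\Gamma(s)$ and $\{i,i'\}\in\Gamma(\gamma_{j,j'}(s))$.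 The algebra is connection-order invariant if $\Gamma$ permits reordering and moreover $\gamma_{j,j'}(\gamma_{i,i'}(s))=\gamma_{i,i'}(\gamma_{j,j'}(s))$ in that situation. It is composition-order invariant if it is connection-order invariant, $\parallel$ is associative and commutative (so parentheses in multiple parallel compositions are irrelevant), and for all $s_1,s_2$ with $\lambda(s_1)\cap\lambda(s_2)=\emptyset$ and $\{i,i'\}\in\Gamma(s_1)$ we have $\gamma_{i,i'}(s_1)\parallel s_2=\gamma_{i,i'}(s_1\parallel s_2)$. *)

theory Defs
  imports Main
begin

text \<open>The partial
operations are modelled by total functions whose values are only constrained
(and only ever used) inside their domain of definition. Unordered pairs {i,i'}
are represented as sets of labels; gam p s stands for gamma_{i,i'}(s) with p = {i,i'}.\<close>

definition system_algebra ::
  "('s \<Rightarrow> 'l set) \<Rightarrow> ('s \<Rightarrow> 's \<Rightarrow> 's) \<Rightarrow> ('s \<Rightarrow> 'l set set) \<Rightarrow> ('l set \<Rightarrow> 's \<Rightarrow> 's) \<Rightarrow> bool"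
where
  "system_algebra lam par Gam gam \<longleftrightarrow>
     (\<forall>s. finite (lam s)) \<and>
     (\<forall>s. \<forall>p\<in>Gam s. \<exists>i i'. p = {i, i'} \<and> i \<in> lam s \<and> i' \<in> lam s) \<and>
     (\<forall>s1 s2. lam s1 \<inter> lam s2 = {} \<longrightarrow>
        lam (par s1 s2) = lam s1 \<union> lam s2 \<and>
        (\<forall>i i'. (i \<in> lam s1 \<and> i' \<in> lam s1 \<longrightarrow> ({i, i'} \<in> Gam (par s1 s2) \<longleftrightarrow> {i, i'} \<in> Gam s1)) \<and>
                (i \<in> lam s2 \<and> i' \<in> lam s2 \<longrightarrow> ({i, i'} \<in> Gam (par s1 s2) \<longleftrightarrow> {i, i'} \<in> Gam s2)))) \<and>
     (\<forall>s p. p \<in> Gam s \<longrightarrow> lam (gam p s) = lam s - p)"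

definition permits_reordering ::
  "('s \<Rightarrow> 'l set set) \<Rightarrow> ('l set \<Rightarrow> 's \<Rightarrow> 's) \<Rightarrow> bool"
where
  "permits_reordering Gam gam \<longleftrightarrow>
     (\<forall>s p q. p \<in> Gam s \<and> q \<in> Gam (gam p s) \<longrightarrow> q \<in> Gam s \<and> p \<in> Gam (gam q s))"

definition connection_order_invariant ::
  "('s \<Rightarrow> 'l set) \<Rightarrow> ('s \<Rightarrow> 's \<Rightarrow> 's) \<Rightarrow> ('s \<Rightarrow> 'l set set) \<Rightarrow> ('l set \<Rightarrow> 's \<Rightarrow> 's) \<Rightarrow> bool"
where
  "connection_order_invariant lam par Gam gam \<longleftrightarrow>
     system_algebra lam par Gam gam \<and> permits_reordering Gam gam \<and>
     (\<forall>s p q. p \<in> Gam s \<and> q \<in> Gam (gam p s) \<longrightarrow> gam q (gam p s) = gam p (gam q s))"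

text \<open>Associativity/commutativity of the partial operation par: equalities required
whenever (both sides are) defined, i.e. for pairwise disjoint label sets.\<close>

definition composition_order_invariant ::
  "('s \<Rightarrow> 'l set) \<Rightarrow> ('s \<Rightarrow> 's \<Rightarrow> 's) \<Rightarrow> ('s \<Rightarrow> 'l set set) \<Rightarrow> ('l set \<Rightarrow> 's \<Rightarrow> 's) \<Rightarrow> bool"
where
  "composition_order_invariant lam par Gam gam \<longleftrightarrow>
     connection_order_invariant lam par Gam gam \<and>
     (\<forall>a b c. lam a \<inter> lam b = {} \<and> lam a \<inter> lam c = {} \<and> lam b \<inter> lam c = {} \<longrightarrow>
        par (par a b) c = par a (par b c)) \<and>
     (\<forall>a b. lam a \<inter> lam b = {} \<longrightarrow> par a b = par b a) \<and>
     (\<forall>s1 s2 p. lam s1 \<inter> lam s2 = {} \<and> p \<in> Gam s1 \<longrightarrow>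
        par (gam p s1) s2 = gam p (par s1 s2))"

end

theory Submission
  imports Defs
begin

lemma coi_sa:
  assumes "composition_order_invariant lam par Gam gam"
  shows "system_algebra lam par Gam gam"
  using assms unfolding composition_order_invariant_def connection_order_invariant_def by (elim conjE)

lemma lam_par:
  assumes "composition_order_invariant lam par Gam gam" "lam a \<inter> lam b = {}"
  shows "lam (par a b) = lam a \<union> lam b"
proof -
  have "\<forall>s1 s2. lam s1 \<inter> lam s2 = {} \<longrightarrow> lam (par s1 s2) = lam s1 \<union> lam s2"
    using coi_sa[OF assms(1)] unfolding system_algebra_def by (elim conjE) blast
  then show ?thesis using assms(2) by blast
qed

lemma lam_gam:
  assumes "composition_order_invariant lam par Gam gam"
    "\<And>s i i'. i \<in> lam s \<Longrightarrow> i' \<in> lam s \<Longrightarrow> i \<noteq> i' \<Longrightarrow> {i, i'} \<in> Gam s"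
    "i \<in> lam s" "i' \<in> lam s" "i \<noteq> i'"
  shows "lam (gam {i, i'} s) = lam s - {i, i'}"
proof -
  have "\<forall>s p. p \<in> Gam s \<longrightarrow> lam (gam p s) = lam s - p"
    using coi_sa[OF assms(1)] unfolding system_algebra_def by (elim conjE)
  then show ?thesis using assms(2)[OF assms(3-5)] by blast
qed

lemma par_gam:
  assumes "composition_order_invariant lam par Gam gam"
    "\<And>s i i'. i \<in> lam s \<Longrightarrow> i' \<in> lam s \<Longrightarrow> i \<noteq> i' \<Longrightarrow> {i, i'} \<in> Gam s"
    "lam a \<inter> lam b = {}" "i \<in> lam a" "i' \<in> lam a" "i \<noteq> i'"
  shows "par (gam {i, i'} a) b = gam {i, i'} (par a b)"
proof -
  have "\<forall>s1 s2 p. lam s1 \<inter> lam s2 = {} \<and> p \<in> Gam s1 \<longrightarrow>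
        par (gam p s1) s2 = gam p (par s1 s2)"
    using assms(1) unfolding composition_order_invariant_def by (elim conjE)
  then show ?thesis using assms(2)[OF assms(4-6)] assms(3) by blast
qed

lemma par_comm:
  assumes "composition_order_invariant lam par Gam gam" "lam a \<inter> lam b = {}"
  shows "par a b = par b a"
proof -
  have "\<forall>a b. lam a \<inter> lam b = {} \<longrightarrow> par a b = par b a"
    using assms(1) unfolding composition_order_invariant_def by (elim conjE)
  then show ?thesis using assms(2) by blast
qed

lemma par_assoc:
  assumes "composition_order_invariant lam par Gam gam" "lam a \<inter> lam b = {}"
    "lam a \<inter> lam c = {}" "lam b \<inter> lam c = {}"
  shows "par (par a b) c = par a (par b c)"
proof -
  have "\<forall>a b c. lam a \<inter> lam b = {} \<and> lam a \<inter> lam c = {} \<and> lam b \<inter> lam c = {} \<longrightarrow>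
        par (par a b) c = par a (par b c)"
    using assms(1) unfolding composition_order_invariant_def by (elim conjE)
  then show ?thesis using assms(2-4) by blast
qed

lemma par_gam2:
  assumes "composition_order_invariant lam par Gam gam"
    "\<And>s i i'. i \<in> lam s \<Longrightarrow> i' \<in> lam s \<Longrightarrow> i \<noteq> i' \<Longrightarrow> {i, i'} \<in> Gam s"
    "lam a \<inter> lam b = {}" "i \<in> lam b" "i' \<in> lam b" "i \<noteq> i'"
  shows "par a (gam {i, i'} b) = gam {i, i'} (par a b)"
proof -
  have "lam (gam {i, i'} b) \<inter> lam a = {}"
    using lam_gam[OF assms(1,2,4-6)] assms(3) by blast
  then have "par a (gam {i, i'} b) = par (gam {i, i'} b) a"
    using par_comm[OF assms(1)] by (metis Int_commute)
  also have "\<dots> = gam {i, i'} (par b a)"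
    using par_gam[OF assms(1,2)] assms(3-6) by (metis Int_commute)
  also have "\<dots> = gam {i, i'} (par a b)" using par_comm[OF assms(1,3)] by simp
  finally show ?thesis .
qed

lemma coi_comm:
  assumes "composition_order_invariant lam par Gam gam" "p \<in> Gam s" "q \<in> Gam (gam p s)"
  shows "gam q (gam p s) = gam p (gam q s)"
proof -
  have "\<forall>s p q. p \<in> Gam s \<and> q \<in> Gam (gam p s) \<longrightarrow> gam q (gam p s) = gam p (gam q s)"
    using assms(1) unfolding composition_order_invariant_def connection_order_invariant_def by (elim conjE)
  then show ?thesis using assms(2,3) by blast
qed

lemma swap:
  assumes "composition_order_invariant lam par Gam gam"
    "\<And>s i i'. i \<in> lam s \<Longrightarrow> i' \<in> lam s \<Longrightarrow> i \<noteq> i' \<Longrightarrow> {i, i'} \<in> Gam s"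
    "i \<in> lam s" "i' \<in> lam s" "i \<noteq> i'" "j \<in> lam s" "j' \<in> lam s" "j \<noteq> j'"
    "j \<notin> {i, i'}" "j' \<notin> {i, i'}"
  shows "gam {j, j'} (gam {i, i'} s) = gam {i, i'} (gam {j, j'} s)"
proof -
  have p: "{i, i'} \<in> Gam s" using assms(2)[OF assms(3-5)] .
  have l: "lam (gam {i, i'} s) = lam s - {i, i'}" using lam_gam[OF assms(1-5)] .
  have "j \<in> lam (gam {i, i'} s)" unfolding l using assms(6,9) by blast
  moreover have "j' \<in> lam (gam {i, i'} s)" unfolding l using assms(7,10) by blast
  ultimately have q: "{j, j'} \<in> Gam (gam {i, i'} s)"
    using assms(2) assms(8) by blast
  show ?thesis using coi_comm[OF assms(1) p q] .
qed

theorem theorem3p3: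
  fixes lam :: "'s \<Rightarrow> 'l set" and par :: "'s \<Rightarrow> 's \<Rightarrow> 's"
    and Gam :: "'s \<Rightarrow> 'l set set" and gam :: "'l set \<Rightarrow> 's \<Rightarrow> 's"
    and s0 s1 r1 r2 :: 's
    and s01 s02 s11 s12 r11 r12 r21 r22 :: 'l
  assumes alg: "composition_order_invariant lam par Gam gam"
    and full: "\<And>s. {{i, i'} | i i'. i \<in> lam s \<and> i' \<in> lam s \<and> i \<noteq> i'} \<subseteq> Gam s"
    and disj: "lam s0 \<inter> lam s1 = {}" "lam s0 \<inter> lam r1 = {}" "lam s0 \<inter> lam r2 = {}"
              "lam s1 \<inter> lam r1 = {}" "lam s1 \<inter> lam r2 = {}" "lam r1 \<inter> lam r2 = {}"
    and lbl: "s01 \<in> lam s0" "s02 \<in> lam s0" "s11 \<in> lam s1" "s12 \<in> lam s1"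
             "r11 \<in> lam r1" "r12 \<in> lam r1" "r21 \<in> lam r2" "r22 \<in> lam r2"
    and dist: "distinct [s01, s02, s11, s12, r11, r12, r21, r22]"
  shows "{gam {r12, e2} (gam {s02, e1} (gam {s01, r11} (par (par s0 r1) e))) | e e1 e2.
            lam e \<inter> lam s0 = {} \<and> lam e \<inter> lam r1 = {} \<and> e1 \<in> lam e \<and> e2 \<in> lam e \<and> e1 \<noteq> e2}
       \<inter> {gam {e2, r22} (gam {s12, r21} (gam {s11, e1} (par (par s1 e) r2))) | e e1 e2.
            lam e \<inter> lam s1 = {} \<and> lam e \<inter> lam r2 = {} \<and> e1 \<in> lam e \<and> e2 \<in> lam e \<and> e1 \<noteq> e2}
       \<inter> {gam {r12, r22} (gam {e2, r21} (gam {e1, r11} (par (par e r1) r2))) | e e1 e2.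
            lam e \<inter> lam r1 = {} \<and> lam e \<inter> lam r2 = {} \<and> e1 \<in> lam e \<and> e2 \<in> lam e \<and> e1 \<noteq> e2}
       \<noteq> {}"
proof -
  have FG: "\<And>s i i'. i \<in> lam s \<Longrightarrow> i' \<in> lam s \<Longrightarrow> i \<noteq> i' \<Longrightarrow> {i, i'} \<in> Gam s"
  proof -
    fix s i i' assume h: "i \<in> lam s" "i' \<in> lam s" "i \<noteq> i'"
    have "{i, i'} \<in> {{i, i'} | i i'. i \<in> lam s \<and> i' \<in> lam s \<and> i \<noteq> i'}" using h by blast
    then show "{i, i'} \<in> Gam s" using full[of s] by (rule subsetD[rotated])
  qed
  note LP = lam_par[OF alg]
  note LG = lam_gam[OF alg FG]
  note PG = par_gam[OF alg FG]
  note PG2 = par_gam2[OF alg FG]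
  note SW = swap[OF alg FG]
  note PC = par_comm[OF alg]
  note PA = par_assoc[OF alg]
  have d: "s01 \<noteq> s02" "s01 \<noteq> s11" "s01 \<noteq> s12" "s01 \<noteq> r11" "s01 \<noteq> r12" "s01 \<noteq> r21" "s01 \<noteq> r22"
    "s02 \<noteq> s11" "s02 \<noteq> s12" "s02 \<noteq> r11" "s02 \<noteq> r12" "s02 \<noteq> r21" "s02 \<noteq> r22"
    "s11 \<noteq> s12" "s11 \<noteq> r11" "s11 \<noteq> r12" "s11 \<noteq> r21" "s11 \<noteq> r22"
    "s12 \<noteq> r11" "s12 \<noteq> r12" "s12 \<noteq> r21" "s12 \<noteq> r22"
    "r11 \<noteq> r12" "r11 \<noteq> r21" "r11 \<noteq> r22" "r12 \<noteq> r21" "r12 \<noteq> r22" "r21 \<noteq> r22"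
    using dist by auto
  define A where "A = {r12, r22}"
  define B where "B = {s02, s11}"
  define C where "C = {s01, r11}"
  define D where "D = {s12, r21}"
  define X where "X = par (par s0 r1) (par s1 r2)"
  define T where "T = gam A (gam B (gam C (gam D X)))"
  have dX: "(lam s0 \<union> lam r1) \<inter> (lam s1 \<union> lam r2) = {}" using disj by blast
  have l01: "lam (par s0 r1) = lam s0 \<union> lam r1" using LP[OF disj(2)] .
  have l12: "lam (par s1 r2) = lam s1 \<union> lam r2" using LP[OF disj(5)] .
  have lX: "lam X = (lam s0 \<union> lam r1) \<union> (lam s1 \<union> lam r2)"
    unfolding X_def using LP[of "par s0 r1" "par s1 r2"] dX l01 l12 by simp
  have lCX: "lam (gam C X) = lam X - C" unfolding C_def
    by (rule LG) (use lX lbl d in auto)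
  have TC: "T = gam A (gam B (gam C (gam D X)))" by (simp add: T_def)
  define e0 where "e0 = gam D (par s1 r2)"
  have le0: "lam e0 = lam (par s1 r2) - D" unfolding e0_def D_def
    by (rule LG) (use l12 lbl d in auto)
  have eq0: "par (par s0 r1) e0 = gam D X" unfolding e0_def D_def X_def
    by (rule PG2) (use l01 l12 dX lbl d in auto)
  have m0: "\<exists>e a b. T = gam {r12, b} (gam {s02, a} (gam {s01, r11} (par (par s0 r1) e))) \<and>
            lam e \<inter> lam s0 = {} \<and> lam e \<inter> lam r1 = {} \<and> a \<in> lam e \<and> b \<in> lam e \<and> a \<noteq> b"
  proof (intro exI conjI)
    show "T = gam {r12, r22} (gam {s02, s11} (gam {s01, r11} (par (par s0 r1) e0)))"
      using eq0 by (simp add: T_def A_def B_def C_def)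
    show "lam e0 \<inter> lam s0 = {}" "lam e0 \<inter> lam r1 = {}" using le0 l12 disj by auto
    show "s11 \<in> lam e0" "r22 \<in> lam e0" "s11 \<noteq> r22" using le0 l12 lbl d by (auto simp: D_def)
  qed
  define e1 where "e1 = gam C (par s0 r1)"
  have le1: "lam e1 = lam (par s0 r1) - C" unfolding e1_def C_def
    by (rule LG) (use l01 lbl d in auto)
  have d1: "lam s1 \<inter> lam (par s0 r1) = {}" using l01 disj by auto
  have l1P: "lam (par s1 (par s0 r1)) = lam s1 \<union> (lam s0 \<union> lam r1)" using LP[OF d1] l01 by simp
  have st1: "par s1 e1 = gam C (par s1 (par s0 r1))" unfolding e1_def C_def
    by (rule PG2) (use d1 l01 lbl d in auto)
  have st2: "par (gam C (par s1 (par s0 r1))) r2 = gam C (par (par s1 (par s0 r1)) r2)" unfolding C_def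
    by (rule PG) (use l1P disj lbl d in auto)
  have st3: "par s1 (par s0 r1) = par (par s0 r1) s1" using PC[OF d1] .
  have st4: "par (par (par s0 r1) s1) r2 = X" unfolding X_def
    by (rule PA) (use l01 disj in auto)
  have lBCX: "lam (gam B (gam C X)) = lam X - C - B" unfolding B_def
    by (subst LG) (use lCX lX lbl d in \<open>auto simp: C_def\<close>)
  have sw1: "gam D (gam B (gam C X)) = gam B (gam D (gam C X))" unfolding B_def D_def
    by (rule SW) (use lCX lX lbl d in \<open>auto simp: C_def\<close>)
  have sw2: "gam D (gam C X) = gam C (gam D X)" unfolding C_def D_def
    by (rule SW) (use lX lbl d in auto)
  have m1: "\<exists>e a b. T = gam {b, r22} (gam {s12, r21} (gam {s11, a} (par (par s1 e) r2))) \<and>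
            lam e \<inter> lam s1 = {} \<and> lam e \<inter> lam r2 = {} \<and> a \<in> lam e \<and> b \<in> lam e \<and> a \<noteq> b"
  proof (intro exI conjI)
    have "par (par s1 e1) r2 = gam C X" using st1 st2 st3 st4 by simp
    moreover have "{s11, s02} = B" by (auto simp: B_def)
    ultimately show "T = gam {r12, r22} (gam {s12, r21} (gam {s11, s02} (par (par s1 e1) r2)))"
      using sw1 sw2 by (simp add: T_def A_def D_def)
    show "lam e1 \<inter> lam s1 = {}" "lam e1 \<inter> lam r2 = {}" using le1 l01 disj by auto
    show "s02 \<in> lam e1" "r12 \<in> lam e1" "s02 \<noteq> r12" using le1 l01 lbl d by (auto simp: C_def)
  qed
  define e2 where "e2 = gam B (par s0 s1)"
  have l0s1: "lam (par s0 s1) = lam s0 \<union> lam s1" using LP[OF disj(1)] .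
  have le2: "lam e2 = lam (par s0 s1) - B" unfolding e2_def B_def
    by (rule LG) (use l0s1 lbl d in auto)
  have lPr: "lam (par (par s0 s1) r1) = lam s0 \<union> lam s1 \<union> lam r1"
  proof -
    have dd: "lam (par s0 s1) \<inter> lam r1 = {}" using l0s1 disj by auto
    show ?thesis using LP[OF dd] l0s1 by simp
  qed
  have t1: "par e2 r1 = gam B (par (par s0 s1) r1)" unfolding e2_def B_def
    by (rule PG) (use l0s1 disj lbl d in auto)
  have t2: "par (gam B (par (par s0 s1) r1)) r2 = gam B (par (par (par s0 s1) r1) r2)" unfolding B_def
    by (rule PG) (use lPr disj lbl d in auto)
  have t3: "par (par s0 s1) r1 = par s0 (par s1 r1)" by (rule PA) (use disj in auto)
  have t4: "par s1 r1 = par r1 s1" by (rule PC) (use disj in auto)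
  have t5: "par s0 (par r1 s1) = par (par s0 r1) s1" by (rule PA[symmetric]) (use disj in auto)
  have sw3: "gam C (gam B X) = gam B (gam C X)" unfolding C_def B_def
    by (rule SW) (use lX lbl d in auto)
  have m2: "\<exists>e a b. T = gam {r12, r22} (gam {b, r21} (gam {a, r11} (par (par e r1) r2))) \<and>
            lam e \<inter> lam r1 = {} \<and> lam e \<inter> lam r2 = {} \<and> a \<in> lam e \<and> b \<in> lam e \<and> a \<noteq> b"
  proof (intro exI conjI)
    have "par (par e2 r1) r2 = gam B X" using t1 t2 t3 t4 t5 st4 by simp
    then show "T = gam {r12, r22} (gam {s12, r21} (gam {s01, r11} (par (par e2 r1) r2)))"
      using sw1 sw2 sw3 by (simp add: T_def A_def D_def C_def)
    show "lam e2 \<inter> lam r1 = {}" "lam e2 \<inter> lam r2 = {}" using le2 l0s1 disj by auto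
    show "s01 \<in> lam e2" "s12 \<in> lam e2" "s01 \<noteq> s12" using le2 l0s1 lbl d by (auto simp: B_def)
  qed
  have Tin: "T \<in> {gam {r12, e2} (gam {s02, e1} (gam {s01, r11} (par (par s0 r1) e))) | e e1 e2.
            lam e \<inter> lam s0 = {} \<and> lam e \<inter> lam r1 = {} \<and> e1 \<in> lam e \<and> e2 \<in> lam e \<and> e1 \<noteq> e2}
       \<inter> {gam {e2, r22} (gam {s12, r21} (gam {s11, e1} (par (par s1 e) r2))) | e e1 e2.
            lam e \<inter> lam s1 = {} \<and> lam e \<inter> lam r2 = {} \<and> e1 \<in> lam e \<and> e2 \<in> lam e \<and> e1 \<noteq> e2}
       \<inter> {gam {r12, r22} (gam {e2, r21} (gam {e1, r11} (par (par e r1) r2))) | e e1 e2.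
            lam e \<inter> lam r1 = {} \<and> lam e \<inter> lam r2 = {} \<and> e1 \<in> lam e \<and> e2 \<in> lam e \<and> e1 \<noteq> e2}"
    by (intro IntI CollectI) (fact m0, fact m1, fact m2)
  show ?thesis by (rule ex_in_conv[THEN iffD1], rule exI, rule Tin)
qed

end
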